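(* Let $(\mathbf d_n)_{n\ge1}$ be a family of degree sequences, $\mathbf d_n=(d_{n,1},\ldots,d_{n,n})\in\mathbb N_0^n$ with $\sum_{j=1}^n d_{n,j}=n$, and let $(v_n)_{n\ge1}$ be vertices with $v_n\in[n]$. Assume \[\sigma^2(\mathbf d_n)=o(n),\qquad \sigma^2(\mathbf d_n)=\omega(n^{-1}),\qquad \Delta(\mathbf d_n)=o\big(\sqrt{n\sigma^2(\mathbf d_n)}\big)\] as $n\to\infty$. Then $\mathfrak s_n(v_n)/\sqrt{n/\sigma^2(\mathbf d_n)}$ converges in distribution to the standard Rayleigh distribution, i.e. \[\lim_{n\to\infty}\mathbb P\Big(\mathfrak s_n(v_n)>x\sqrt{n/\sigma^2(\mathbf d_n)}\Big)=e^{-x^2/2}\quad\text{for all }x>0.\]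
   Context: A degree sequence is $\mathbf d_n=(d_{n,1},\ldots,d_{n,n})\in\mathbb N_0^n$ with $\sum_j d_{n,j}=n$. For such a sequence let $\mathfrak F(\mathbf d_n)=\{f:[n]\to[n]: |f^{-1}(\{i\})|=d_{n,i}\ \forall i\in[n]\}$; a random functional graph with degree sequence $\mathbf d_n$ is the graph with edges $\{(v,F(v))\}$ where $F$ is uniform on $\mathfrak F(\mathbf d_n)$. For $f:V\to V$ and $v\in V$, the six-length is $\mathfrak s_f(v)=\min\{k\in\mathbb N: f^{(k)}(v)\in\{f^{(j)}(v):0\le j\le k-1\}\}$ ($f^{(k)}$ the $k$-fold composition, $f^{(0)}=\mathrm{id}$); $\mathfrak s_n(v)$ denotes $\mathfrak s_F(v)$ for $F$ uniform on $\mathfrak F(\mathbf d_n)$. Notation: $\Delta(\mathbf d_n)=\max_j d_{n,j}$, $m_k(\mathbf d_n)=\sum_j d_{n,j}^k$, $\sigma^2(\mathbf d_n)=m_2(\mathbf d_n)/n-1$. $a_n=\omega(b_n)$ means $b_n=o(a_n)$. *)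

theory Defs
  imports "HOL-Probability.Probability" "HOL-Library.Landau_Symbols"
begin

text \<open>A family of degree sequences is given as d :: nat => nat => nat, where
  d n j is the j-th entry of the n-th degree sequence, j in [n] = {1..n}.\<close>

definition is_degree_seq :: "nat \<Rightarrow> (nat \<Rightarrow> nat) \<Rightarrow> bool" where
  "is_degree_seq n dn \<longleftrightarrow> (\<Sum>j=1..n. dn j) = n"

text \<open>The set F(d_n) of maps [n] -> [n] with prescribed in-degrees
  (extensional, so that it is a finite set).\<close>
definition funs_deg :: "nat \<Rightarrow> (nat \<Rightarrow> nat) \<Rightarrow> (nat \<Rightarrow> nat) set" where
  "funs_deg n dn = {f \<in> {1..n} \<rightarrow>\<^sub>E {1..n}.
      \<forall>i\<in>{1..n}. card {v\<in>{1..n}. f v = i} = dn i}"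

definition six_length :: "('a \<Rightarrow> 'a) \<Rightarrow> 'a \<Rightarrow> nat" where
  "six_length f v = (LEAST k. k \<ge> 1 \<and> (f ^^ k) v \<in> {(f ^^ j) v | j. j \<le> k - 1})"

definition Delta :: "nat \<Rightarrow> (nat \<Rightarrow> nat) \<Rightarrow> nat" where
  "Delta n dn = Max (dn ` {1..n})"

definition moment :: "nat \<Rightarrow> nat \<Rightarrow> (nat \<Rightarrow> nat) \<Rightarrow> nat" where
  "moment k n dn = (\<Sum>j=1..n. dn j ^ k)"

definition sigma2 :: "nat \<Rightarrow> (nat \<Rightarrow> nat) \<Rightarrow> real" where
  "sigma2 n dn = real (moment 2 n dn) / real n - 1"

definition rfg :: "nat \<Rightarrow> (nat \<Rightarrow> nat) \<Rightarrow> (nat \<Rightarrow> nat) pmf" where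
  "rfg n dn = pmf_of_set (funs_deg n dn)"

end

theory Submission
  imports Defs "HOL-Combinatorics.Multiset_Permutations"
begin


definition FD :: "'a set \<Rightarrow> 'b set \<Rightarrow> ('b \<Rightarrow> nat) \<Rightarrow> ('a \<Rightarrow> 'b) set" where
  "FD A B g = {f \<in> A \<rightarrow>\<^sub>E B. \<forall>b\<in>B. card {a\<in>A. f a = b} = g b}"

lemma finite_FD: "finite A \<Longrightarrow> finite B \<Longrightarrow> finite (FD A B g)"
  unfolding FD_def by (rule finite_subset[OF _ finite_PiE[of A "\<lambda>_. B"]]) auto

lemma step_card:
  assumes A: "finite A" "a \<in> A" "b \<in> B" "g b \<ge> 1"
  shows "card {f \<in> FD A B g. f a = b \<and> Q f} =
         card {f \<in> FD (A - {a}) B (g(b := g b - 1)). Q (f(a := b))}"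
proof (rule bij_betw_same_card[of "\<lambda>f. f(a := undefined)"], rule bij_betw_byWitness[of _ "\<lambda>f. f(a := b)"])
  show "\<forall>f\<in>{f \<in> FD A B g. f a = b \<and> Q f}. f(a := undefined, a := b) = f" by auto
  show "\<forall>f\<in>{f \<in> FD (A - {a}) B (g(b := g b - 1)). Q (f(a := b))}. f(a := b, a := undefined) = f"
    by (auto simp: FD_def PiE_def extensional_def fun_eq_iff)
  show "(\<lambda>f. f(a := undefined)) ` {f \<in> FD A B g. f a = b \<and> Q f}
    \<subseteq> {f \<in> FD (A - {a}) B (g(b := g b - 1)). Q (f(a := b))}"
  proof (rule image_subsetI)
    fix f assume "f \<in> {f \<in> FD A B g. f a = b \<and> Q f}"
    then have f: "f \<in> FD A B g" "Q f" "f a = b" by auto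
    have q: "Q (f(a := undefined, a := b))" using f by (metis fun_upd_triv fun_upd_upd)
    have "f(a := undefined) \<in> FD (A - {a}) B (g(b := g b - 1))"
      unfolding FD_def
    proof (intro CollectI conjI ballI)
      show "f(a := undefined) \<in> A - {a} \<rightarrow>\<^sub>E B" using f(1) by (auto simp: FD_def PiE_def extensional_def)
      fix b' assume b': "b' \<in> B"
      have e: "{x \<in> A - {a}. (f(a := undefined)) x = b'} = {x\<in>A. f x = b'} - {a}" by auto
      have c: "card {x\<in>A. f x = b'} = g b'" using f(1) b' by (auto simp: FD_def)
      show "card {x \<in> A - {a}. (f(a := undefined)) x = b'} = (g(b := g b - 1)) b'"
        unfolding e using A(1,2) c f(3) by (auto simp: card_Diff_singleton_if)
    qed
    then show "f(a := undefined) \<in> {f \<in> FD (A - {a}) B (g(b := g b - 1)). Q (f(a := b))}"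
      using q by simp
  qed
  show "(\<lambda>f. f(a := b)) ` {f \<in> FD (A - {a}) B (g(b := g b - 1)). Q (f(a := b))}
    \<subseteq> {f \<in> FD A B g. f a = b \<and> Q f}"
  proof (rule image_subsetI)
    fix f assume "f \<in> {f \<in> FD (A - {a}) B (g(b := g b - 1)). Q (f(a := b))}"
    then have f: "f \<in> FD (A - {a}) B (g(b := g b - 1))" "Q (f(a := b))" by auto
    have "f(a := b) \<in> FD A B g" unfolding FD_def
    proof (intro CollectI conjI ballI)
      show "f(a := b) \<in> A \<rightarrow>\<^sub>E B" using f(1) A by (auto simp: FD_def PiE_def extensional_def)
      fix b' assume b': "b' \<in> B"
      have c: "card {x\<in>A - {a}. f x = b'} = (g(b := g b - 1)) b'" using f(1) b' by (auto simp: FD_def)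
      show "card {x \<in> A. (f(a := b)) x = b'} = g b'"
      proof (cases "b' = b")
        case True
        have e: "{x \<in> A. (f(a := b)) x = b'} = insert a {x\<in>A - {a}. f x = b'}" using True A by auto
        have "finite {x\<in>A - {a}. f x = b'}" using A by auto
        then show ?thesis unfolding e using c True A by (subst card_insert_disjoint) auto
      next
        case False
        have e: "{x \<in> A. (f(a := b)) x = b'} = {x\<in>A - {a}. f x = b'}" using False A by auto
        show ?thesis unfolding e using c False by auto
      qed
    qed
    then show "f(a := b) \<in> {f \<in> FD A B g. f a = b \<and> Q f}" using f by simp
  qed
qed

lemma FD_empty: "(\<forall>b\<in>B. g b = 0) \<Longrightarrow> FD {} B g = {\<lambda>_. undefined}"
  unfolding FD_def by auto

lemma card_FD_aux:
  assumes "finite A" "finite B" "sum g B = card A"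
  shows "real (card (FD A B g)) * (\<Prod>b\<in>B. fact (g b)) = fact (card A)"
  using assms
proof (induction A arbitrary: g rule: finite_induct)
  case empty
  then have "\<forall>b\<in>B. g b = 0" by simp
  then show ?case by (simp add: FD_empty)
next
  case (insert a A)
  let ?S = "FD (insert a A) B g"
  have fin: "finite ?S" using insert by (simp add: finite_FD)
  have Seq: "?S = (\<Union>b\<in>B. {f \<in> ?S. f a = b})" by (auto simp: FD_def PiE_def)
  have cS: "card ?S = (\<Sum>b\<in>B. card {f \<in> ?S. f a = b})"
    by (subst Seq, rule card_UN_disjoint) (use insert fin in auto)
  have each: "real (card {f \<in> ?S. f a = b}) * (\<Prod>b\<in>B. fact (g b)) = fact (card A) * g b"
    if b: "b \<in> B" for b
  proof (cases "g b = 0")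
    case True
    have "{f \<in> ?S. f a = b} = {}"
    proof (rule ccontr)
      assume "{f \<in> ?S. f a = b} \<noteq> {}"
      then obtain f where f: "f \<in> ?S" "f a = b" by auto
      then have "card {x\<in>insert a A. f x = b} = 0" using b True by (auto simp: FD_def)
      moreover have "finite {x\<in>insert a A. f x = b}" "a \<in> {x\<in>insert a A. f x = b}" using insert f by auto
      ultimately show False by auto
    qed
    then have "card {f \<in> ?S. f a = b} = 0" by (metis card.empty)
    then show ?thesis using True by simp
  next
    case False
    let ?g = "g(b := g b - 1)"
    have c1: "card {f \<in> ?S. f a = b} = card {f \<in> FD (insert a A - {a}) B ?g. True}"
      using step_card[of "insert a A" a b B g "\<lambda>_. True"] insert b False by auto
    have ia: "insert a A - {a} = A" using insert by auto
    have sg: "sum ?g B = card A"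
      using insert.prems(2) b False insert(1,2) by (simp add: sum.remove[OF insert.prems(1) b] sum.remove[OF insert.prems(1) b, of g])
    have IH: "real (card (FD A B ?g)) * (\<Prod>b\<in>B. fact (?g b)) = fact (card A)"
      using insert.IH[OF insert.prems(1) sg] .
    have pr: "(\<Prod>b\<in>B. fact (g b)) = real (g b) * (\<Prod>b\<in>B. fact (?g b))"
    proof -
      have "(\<Prod>b\<in>B. (fact (g b)::real)) = fact (g b) * (\<Prod>b'\<in>B - {b}. fact (g b'))"
        by (rule prod.remove[OF insert.prems(1) b])
      moreover have "(\<Prod>b'\<in>B. (fact (?g b')::real)) = fact (g b - 1) * (\<Prod>b'\<in>B - {b}. fact (?g b'))"
        using prod.remove[OF insert.prems(1) b, of "\<lambda>b'. (fact (?g b')::real)"] by simp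
      moreover have "(\<Prod>b'\<in>B - {b}. (fact (?g b')::real)) = (\<Prod>b'\<in>B - {b}. fact (g b'))"
        by (rule prod.cong) auto
      moreover have "(fact (g b)::real) = real (g b) * fact (g b - 1)"
        using False by (metis fact_reduce of_nat_fact not_gr_zero)
      ultimately show ?thesis by simp
    qed
    show ?thesis using IH unfolding c1 ia pr by simp
  qed
  have "real (card ?S) * (\<Prod>b\<in>B. fact (g b)) = (\<Sum>b\<in>B. real (card {f \<in> ?S. f a = b}) * (\<Prod>b\<in>B. fact (g b)))"
    by (simp add: cS sum_distrib_right)
  also have "\<dots> = (\<Sum>b\<in>B. fact (card A) * real (g b))" by (rule sum.cong) (use each in auto)
  also have "\<dots> = fact (card A) * real (card (insert a A))"
    using insert by (simp add: sum_distrib_left[symmetric] flip: of_nat_sum)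
  also have "\<dots> = fact (card (insert a A))" using insert by simp
  finally show ?case .
qed




fun chain :: "'a \<Rightarrow> 'a list \<Rightarrow> ('a \<Rightarrow> 'a) \<Rightarrow> bool" where
  "chain u [] f = True"
| "chain u (x#xs) f = (f u = x \<and> chain x xs f)"

lemma chain_upd: "u \<notin> set (butlast (x#xs)) \<Longrightarrow> chain x xs (f(u:=w)) = chain x xs f"
  by (induction xs arbitrary: x) auto

lemma card_chain:
  assumes "finite A" "finite B" "sum g B = card A" "distinct (u#xs)" "set xs \<subseteq> B"
    "set (butlast (u#xs)) \<subseteq> A"
  shows "real (card {f \<in> FD A B g. chain u xs f}) * (\<Prod>b\<in>B. fact (g b))
         = fact (card A - length xs) * (\<Prod>b\<in>set xs. real (g b))"
  using assms
proof (induction xs arbitrary: u A g)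
  case Nil
  then show ?case using card_FD_aux[of A B g] by simp
next
  case (Cons x xs)
  have uA: "u \<in> A" using Cons.prems(6) by simp
  have xB: "x \<in> B" using Cons.prems(5) by simp
  show ?case
  proof (cases "g x = 0")
    case True
    have "{f \<in> FD A B g. chain u (x#xs) f} = {}"
    proof (rule ccontr)
      assume "{f \<in> FD A B g. chain u (x#xs) f} \<noteq> {}"
      then obtain f where f: "f \<in> FD A B g" "f u = x" by auto
      then have "card {y\<in>A. f y = x} = 0" using xB True by (auto simp: FD_def)
      moreover have "finite {y\<in>A. f y = x}" "u \<in> {y\<in>A. f y = x}" using Cons.prems f uA by auto
      ultimately show False by auto
    qed
    then have "card {f \<in> FD A B g. chain u (x#xs) f} = 0" by (metis card.empty)
    moreover have "(\<Prod>b\<in>set (x#xs). real (g b)) = 0"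
      using True by (intro prod_zero) auto
    ultimately show ?thesis by simp
  next
    case False
    let ?g = "g(x := g x - 1)"
    have c1: "card {f \<in> FD A B g. chain u (x#xs) f} = card {f \<in> FD (A - {u}) B ?g. chain x xs (f(u := x))}"
      using step_card[of A u x B g "chain x xs"] Cons.prems uA xB False by auto
    have nb: "u \<notin> set (butlast (x#xs))" using Cons.prems(4)
      by (metis distinct.simps(2) in_set_butlastD)
    have c2: "{f \<in> FD (A - {u}) B ?g. chain x xs (f(u := x))} = {f \<in> FD (A - {u}) B ?g. chain x xs f}"
      using chain_upd[OF nb] by simp
    have sg: "sum ?g B = card (A - {u})"
      using Cons.prems(2,3) xB False uA Cons.prems(1)
      by (simp add: sum.remove[OF Cons.prems(2) xB] sum.remove[OF Cons.prems(2) xB, of g])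
    have IH: "real (card {f \<in> FD (A - {u}) B ?g. chain x xs f}) * (\<Prod>b\<in>B. fact (?g b))
         = fact (card (A - {u}) - length xs) * (\<Prod>b\<in>set xs. real (?g b))"
      apply (rule Cons.IH)
      using Cons.prems sg nb by (auto dest: in_set_butlastD split: if_splits)
    have pr: "(\<Prod>b\<in>B. fact (g b)) = real (g x) * (\<Prod>b\<in>B. fact (?g b))"
    proof -
      have "(\<Prod>b\<in>B. (fact (g b)::real)) = fact (g x) * (\<Prod>b'\<in>B - {x}. fact (g b'))"
        by (rule prod.remove[OF Cons.prems(2) xB])
      moreover have "(\<Prod>b'\<in>B. (fact (?g b')::real)) = fact (g x - 1) * (\<Prod>b'\<in>B - {x}. fact (?g b'))"
        using prod.remove[OF Cons.prems(2) xB, of "\<lambda>b'. (fact (?g b')::real)"] by simp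
      moreover have "(\<Prod>b'\<in>B - {x}. (fact (?g b')::real)) = (\<Prod>b'\<in>B - {x}. fact (g b'))"
        by (rule prod.cong) auto
      moreover have "(fact (g x)::real) = real (g x) * fact (g x - 1)"
        using False by (metis fact_reduce of_nat_fact not_gr_zero)
      ultimately show ?thesis by simp
    qed
    have xn: "x \<notin> set xs" using Cons.prems(4) by simp
    have p2: "(\<Prod>b\<in>set xs. real (?g b)) = (\<Prod>b\<in>set xs. real (g b))"
      by (rule prod.cong) (use xn in auto)
    have ca: "card (A - {u}) - length xs = card A - length (x#xs)"
      using uA Cons.prems(1) by simp
    show ?thesis
      unfolding c1 c2 pr using IH p2 ca xn by (simp add: mult.assoc mult.left_commute)
  qed
qed

lemma chain_iff: "chain u xs f \<longleftrightarrow> xs = map (\<lambda>i. (f^^Suc i) u) [0..<length xs]"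
proof (induction xs arbitrary: u)
  case Nil then show ?case by simp
next
  case (Cons x xs)
  have "map (\<lambda>i. (f^^Suc i) u) [0..<length (x#xs)] = f u # map (\<lambda>i. (f^^Suc i) (f u)) [0..<length xs]"
    by (simp only: length_Cons map_upt_Suc) (simp add: funpow_swap1)
  then show ?case using Cons.IH[of "f u"] by auto
qed




lemma distinct_iter_iff:
  "distinct (map (\<lambda>i. (f^^i) u) [0..<Suc j]) \<longleftrightarrow>
   (\<forall>k\<le>j. \<not> (k \<ge> 1 \<and> (f^^k) u \<in> {(f^^i) u | i. i \<le> k - 1}))"
proof (induction j)
  case 0 then show ?case by simp
next
  case (Suc j)
  define Q where "Q k \<longleftrightarrow> \<not> (k \<ge> 1 \<and> (f^^k) u \<in> {(f^^i) u | i. i \<le> k - 1})" for k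
  have s: "set (map (\<lambda>i. (f^^i) u) [0..<Suc j]) = {(f^^i) u | i. i \<le> Suc j - 1}"
  proof -
    have "set (map (\<lambda>i. (f^^i) u) [0..<Suc j]) = (\<lambda>i. (f^^i) u) ` {..j}"
      by (simp only: set_map set_upt atLeast0LessThan lessThan_Suc_atMost)
    then show ?thesis by auto
  qed
  have "distinct (map (\<lambda>i. (f^^i) u) [0..<Suc (Suc j)]) \<longleftrightarrow>
     distinct (map (\<lambda>i. (f^^i) u) [0..<Suc j]) \<and> (f^^Suc j) u \<notin> set (map (\<lambda>i. (f^^i) u) [0..<Suc j])"
    by (simp only: upt_Suc_append[of 0 "Suc j"] map_append distinct_append) auto
  also have "\<dots> \<longleftrightarrow> (\<forall>k\<le>j. Q k) \<and> Q (Suc j)"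
    unfolding Suc.IH s Q_def by simp
  also have "\<dots> \<longleftrightarrow> (\<forall>k\<le>Suc j. Q k)" by (auto simp: le_Suc_eq)
  also have "\<dots> \<longleftrightarrow> (\<forall>k\<le>Suc j. \<not> (k \<ge> 1 \<and> (f^^k) u \<in> {(f^^i) u | i. i \<le> k - 1}))"
    unfolding Q_def ..
  finally show ?case .
qed

lemma six_length_gt:
  assumes "finite V" "\<And>i. (f^^i) u \<in> V"
  shows "six_length f u > j \<longleftrightarrow> distinct (map (\<lambda>i. (f^^i) u) [0..<Suc j])"
proof -
  define P where "P k \<longleftrightarrow> k \<ge> 1 \<and> (f^^k) u \<in> {(f^^i) u | i. i \<le> k - 1}" for k
  have sl: "six_length f u = (LEAST k. P k)" unfolding six_length_def P_def ..
  have "\<not> distinct (map (\<lambda>i. (f^^i) u) [0..<Suc (card V)])"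
  proof
    assume d: "distinct (map (\<lambda>i. (f^^i) u) [0..<Suc (card V)])"
    have "set (map (\<lambda>i. (f^^i) u) [0..<Suc (card V)]) \<subseteq> V" using assms(2) by auto
    then have "card (set (map (\<lambda>i. (f^^i) u) [0..<Suc (card V)])) \<le> card V"
      by (rule card_mono[OF assms(1)])
    then show False using distinct_card[OF d] by simp
  qed
  then obtain k0 where k0: "P k0" unfolding distinct_iter_iff P_def by blast
  show ?thesis
  proof
    assume "j < six_length f u"
    then have "\<forall>k\<le>j. \<not> P k" unfolding sl using Least_le[of P] by (meson le_less_trans not_le)
    then show "distinct (map (\<lambda>i. (f^^i) u) [0..<Suc j])" unfolding distinct_iter_iff P_def by blast
  next
    assume "distinct (map (\<lambda>i. (f^^i) u) [0..<Suc j])"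
    then have "\<forall>k\<le>j. \<not> P k" unfolding distinct_iter_iff P_def by blast
    moreover have "P (LEAST k. P k)" using k0 by (rule LeastI)
    ultimately show "j < six_length f u" unfolding sl by (meson not_le)
  qed
qed

lemma funs_deg_FD: "funs_deg n dn = FD {1..n} {1..n} dn"
  unfolding funs_deg_def FD_def ..

lemma iter_in:
  assumes "f \<in> V \<rightarrow>\<^sub>E V" "u \<in> V" shows "(f^^i) u \<in> V"
  by (induction i) (use assms in auto)

definition LL :: "nat \<Rightarrow> nat set \<Rightarrow> nat \<Rightarrow> nat list set" where
  "LL u V j = {xs. length xs = j \<and> distinct (u#xs) \<and> set xs \<subseteq> V}"

lemma finite_LL: "finite V \<Longrightarrow> finite (LL u V j)"
  unfolding LL_def by (rule finite_subset[OF _ finite_lists_length_eq[of V j]]) auto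

lemma event_count:
  assumes V: "finite V" "u \<in> V" "sum g V = card V"
  shows "real (card {f \<in> FD V V g. six_length f u > j}) * (\<Prod>b\<in>V. fact (g b))
       = fact (card V - j) * (\<Sum>xs\<in>LL u V j. \<Prod>b\<in>set xs. real (g b))"
proof -
  have it: "\<And>f i. f \<in> FD V V g \<Longrightarrow> (f^^i) u \<in> V" using V by (auto simp: FD_def intro: iter_in)
  have eq: "{f \<in> FD V V g. six_length f u > j} = (\<Union>xs\<in>LL u V j. {f \<in> FD V V g. chain u xs f})"
  proof safe
    fix f assume f: "f \<in> FD V V g" "j < six_length f u"
    let ?xs = "map (\<lambda>i. (f^^Suc i) u) [0..<j]"
    have d: "distinct (map (\<lambda>i. (f^^i) u) [0..<Suc j])" using f six_length_gt[OF V(1) it[OF f(1)]] by blast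
    have "map (\<lambda>i. (f^^i) u) [0..<Suc j] = u # ?xs" by (simp only: map_upt_Suc) simp
    then have "distinct (u # ?xs)" using d by simp
    moreover have "set ?xs \<subseteq> V" using it[OF f(1)] by (auto simp del: funpow.simps)
    ultimately have "?xs \<in> LL u V j" unfolding LL_def by simp
    moreover have "chain u ?xs f" by (simp add: chain_iff)
    ultimately show "f \<in> (\<Union>xs\<in>LL u V j. {f \<in> FD V V g. chain u xs f})" using f by blast
  next
    fix f xs assume f: "f \<in> FD V V g" "xs \<in> LL u V j" "chain u xs f"
    have xs: "xs = map (\<lambda>i. (f^^Suc i) u) [0..<j]" using f(2,3) chain_iff[of u xs f] by (simp add: LL_def)
    have "map (\<lambda>i. (f^^i) u) [0..<Suc j] = u # xs" unfolding xs by (simp only: map_upt_Suc) simp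
    then have "distinct (map (\<lambda>i. (f^^i) u) [0..<Suc j])" using f(2) by (simp add: LL_def)
    then show "j < six_length f u" using six_length_gt[OF V(1) it[OF f(1)]] by blast
  qed
  have "card {f \<in> FD V V g. six_length f u > j} = (\<Sum>xs\<in>LL u V j. card {f \<in> FD V V g. chain u xs f})"
    unfolding eq
  proof (rule card_UN_disjoint)
    show "finite (LL u V j)" using V(1) by (rule finite_LL)
    show "\<forall>i\<in>LL u V j. finite {f \<in> FD V V g. chain u i f}"
      using finite_FD[OF V(1) V(1), of g] by (simp add: finite_Collect_conjI)
    show "\<forall>i\<in>LL u V j. \<forall>ja\<in>LL u V j. i \<noteq> ja \<longrightarrow> {f \<in> FD V V g. chain u i f} \<inter> {f \<in> FD V V g. chain u ja f} = {}"
    proof (intro ballI impI)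
      fix xs ys assume "xs \<in> LL u V j" "ys \<in> LL u V j" "xs \<noteq> ys"
      then show "{f \<in> FD V V g. chain u xs f} \<inter> {f \<in> FD V V g. chain u ys f} = {}"
        using chain_iff[of u xs] chain_iff[of u ys] by (auto simp: LL_def)
    qed
  qed
  then have "real (card {f \<in> FD V V g. six_length f u > j}) * (\<Prod>b\<in>V. fact (g b))
      = (\<Sum>xs\<in>LL u V j. real (card {f \<in> FD V V g. chain u xs f}) * (\<Prod>b\<in>V. fact (g b)))"
    by (simp add: sum_distrib_right)
  also have "\<dots> = (\<Sum>xs\<in>LL u V j. fact (card V - j) * (\<Prod>b\<in>set xs. real (g b)))"
  proof (rule sum.cong[OF refl])
    fix xs assume xs: "xs \<in> LL u V j"
    have "set (butlast (u#xs)) \<subseteq> set (u#xs)" by (rule in_set_butlastD[THEN subsetI])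
    then have "set (butlast (u#xs)) \<subseteq> V" using xs V(2) by (auto simp: LL_def)
    then show "real (card {f \<in> FD V V g. chain u xs f}) * (\<Prod>b\<in>V. fact (g b)) = fact (card V - j) * (\<Prod>b\<in>set xs. real (g b))"
      using card_chain[of V V g u xs] V xs by (auto simp: LL_def)
  qed
  also have "\<dots> = fact (card V - j) * (\<Sum>xs\<in>LL u V j. \<Prod>b\<in>set xs. real (g b))"
    by (simp add: sum_distrib_left)
  finally show ?thesis .
qed

lemma LL_sum:
  assumes "finite V" "u \<in> V"
  shows "(\<Sum>xs\<in>LL u V j. \<Prod>b\<in>set xs. real (g b))
       = fact j * (\<Sum>T | T \<subseteq> V - {u} \<and> card T = j. \<Prod>b\<in>T. real (g b))"
proof -
  let ?I = "{T. T \<subseteq> V - {u} \<and> card T = j}"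
  have finI: "finite ?I" by (rule finite_subset[of _ "Pow (V - {u})"]) (use assms in auto)
  have eq: "LL u V j = (\<Union>T\<in>?I. permutations_of_set T)"
  proof (rule set_eqI)
    fix xs
    have 1: "xs \<in> (\<Union>T\<in>?I. permutations_of_set T) \<longleftrightarrow> set xs \<in> ?I \<and> distinct xs"
      by (auto simp: permutations_of_set_def)
    have 2: "xs \<in> LL u V j \<longleftrightarrow> set xs \<in> ?I \<and> distinct xs"
      by (auto simp: LL_def distinct_card)
    show "xs \<in> LL u V j \<longleftrightarrow> xs \<in> (\<Union>T\<in>?I. permutations_of_set T)" using 1 2 by blast
  qed
  have "(\<Sum>xs\<in>LL u V j. \<Prod>b\<in>set xs. real (g b)) = (\<Sum>T\<in>?I. \<Sum>xs\<in>permutations_of_set T. \<Prod>b\<in>set xs. real (g b))"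
    unfolding eq
  proof (rule sum.UNION_disjoint[OF finI])
    show "\<forall>T\<in>?I. finite (permutations_of_set T)" by simp
    show "\<forall>T\<in>?I. \<forall>T'\<in>?I. T \<noteq> T' \<longrightarrow> permutations_of_set T \<inter> permutations_of_set T' = {}"
      by (auto simp: permutations_of_set_def)
  qed
  also have "\<dots> = (\<Sum>T\<in>?I. fact j * (\<Prod>b\<in>T. real (g b)))"
  proof (rule sum.cong[OF refl])
    fix T assume T: "T \<in> ?I"
    have fT: "finite T" using T assms(1) by (metis (mono_tags, lifting) finite_Diff finite_subset mem_Collect_eq)
    have "(\<Sum>xs\<in>permutations_of_set T. \<Prod>b\<in>set xs. real (g b)) = (\<Sum>xs\<in>permutations_of_set T. \<Prod>b\<in>T. real (g b))"
      by (rule sum.cong) (auto simp: permutations_of_set_def)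
    also have "\<dots> = fact j * (\<Prod>b\<in>T. real (g b))" using T fT by (simp add: card_permutations_of_set)
    finally show "(\<Sum>xs\<in>permutations_of_set T. \<Prod>b\<in>set xs. real (g b)) = fact j * (\<Prod>b\<in>T. real (g b))" .
  qed
  also have "\<dots> = fact j * (\<Sum>T\<in>?I. \<Prod>b\<in>T. real (g b))" by (simp add: sum_distrib_left)
  finally show ?thesis by simp
qed




definition esym :: "nat set \<Rightarrow> (nat \<Rightarrow> nat) \<Rightarrow> nat \<Rightarrow> real" where
  "esym C D j = (\<Sum>T | T \<subseteq> C \<and> card T = j. \<Prod>b\<in>T. real (D b))"

lemma esym_gen:
  assumes "finite C" "card C \<le> n"
  shows "(\<Prod>c\<in>C. 1 + real (D c) * y) = (\<Sum>j\<le>n. esym C D j * y ^ j)"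
proof -
  have "(\<Prod>c\<in>C. 1 + real (D c) * y) = (\<Prod>c\<in>C. real (D c) * y + 1)" by (simp add: add.commute)
  also have "\<dots> = (\<Sum>X\<in>Pow C. (\<Prod>c\<in>X. real (D c) * y) * (\<Prod>c\<in>C - X. 1))"
    by (rule prod_add[OF assms(1)])
  also have "\<dots> = (\<Sum>X\<in>Pow C. (\<Prod>c\<in>X. real (D c)) * y ^ card X)"
    by (simp add: prod.distrib)
  also have "\<dots> = (\<Sum>j\<le>n. \<Sum>X | X \<in> Pow C \<and> card X = j. (\<Prod>c\<in>X. real (D c)) * y ^ card X)"
  proof (rule sum.group[symmetric])
    show "finite (Pow C)" using assms by simp
    show "finite {..n}" by simp
    show "card ` Pow C \<subseteq> {..n}"
    proof (rule image_subsetI)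
      fix X assume "X \<in> Pow C"
      then have "card X \<le> card C" using card_mono[OF assms(1)] by simp
      then show "card X \<in> {..n}" using assms(2) by simp
    qed
  qed
  also have "\<dots> = (\<Sum>j\<le>n. esym C D j * y ^ j)"
    unfolding esym_def by (rule sum.cong[OF refl]) (auto simp: sum_distrib_right intro!: sum.cong)
  finally show ?thesis .
qed

lemma prob_esym:
  assumes n: "sum D {1..n} = n" and u: "u \<in> {1..n}" and j: "j \<le> n"
  shows "measure_pmf.prob (rfg n D) {f. six_length f u > j} * real (n choose j) = esym ({1..n} - {u}) D j"
proof -
  let ?V = "{1..n::nat}"
  let ?F = "FD ?V ?V D"
  have cV: "card ?V = n" by simp
  have cF: "real (card ?F) * (\<Prod>b\<in>?V. fact (D b)) = fact n"
    using card_FD_aux[of ?V ?V D] n by simp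
  have cE: "real (card {f \<in> ?F. six_length f u > j}) * (\<Prod>b\<in>?V. fact (D b))
       = fact (n - j) * (fact j * esym (?V - {u}) D j)"
    using event_count[of ?V u D j] LL_sum[where V="{1..n}" and u=u and j=j and g=D] n u by (simp add: esym_def)
  have pos: "(\<Prod>b\<in>?V. fact (D b)::real) > 0" by (intro prod_pos) auto
  have cF0: "card ?F \<noteq> 0"
  proof
    assume "card ?F = 0"
    then have "(fact n::real) = 0" using cF by simp
    then show False by simp
  qed
  then have ne: "?F \<noteq> {}" by auto
  have fin: "finite ?F" by (simp add: finite_FD)
  have "measure_pmf.prob (rfg n D) {f. six_length f u > j} = real (card {f \<in> ?F. six_length f u > j}) / real (card ?F)"
    unfolding rfg_def funs_deg_FD using measure_pmf_of_set[OF ne fin, of "{f. six_length f u > j}"]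
    by (simp add: Int_def)
  also have "\<dots> = (real (card {f \<in> ?F. six_length f u > j}) * (\<Prod>b\<in>?V. fact (D b))) / (real (card ?F) * (\<Prod>b\<in>?V. fact (D b)))"
    using pos by simp
  also have "\<dots> = fact (n - j) * (fact j * esym (?V - {u}) D j) / fact n" unfolding cE cF ..
  finally have "measure_pmf.prob (rfg n D) {f. six_length f u > j} = fact (n - j) * (fact j * esym (?V - {u}) D j) / fact n" .
  moreover have "real (n choose j) = fact n / (fact j * fact (n - j))" using binomial_fact[OF j] by simp
  ultimately have A: "fact n * measure_pmf.prob (rfg n D) {f. six_length f u > j} = (fact j * fact (n - j)) * esym (?V - {u}) D j"
    and B: "(fact j * fact (n - j)) * real (n choose j) = fact n"
    by (simp_all add: field_simps)
  have "(fact j * fact (n - j)) * (measure_pmf.prob (rfg n D) {f. six_length f u > j} * real (n choose j))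
      = ((fact j * fact (n - j)) * real (n choose j)) * measure_pmf.prob (rfg n D) {f. six_length f u > j}"
    by (simp only: ac_simps)
  also have "\<dots> = (fact j * fact (n - j)) * esym (?V - {u}) D j" unfolding B A ..
  finally show ?thesis by simp
qed

lemma gen_identity:
  assumes n: "sum D {1..n} = n" and u: "u \<in> {1..n}" and p: "0 \<le> p" "p < 1"
  shows "(\<Sum>j\<le>n. real (n choose j) * p ^ j * (1 - p) ^ (n - j) * measure_pmf.prob (rfg n D) {f. six_length f u > j})
       = (1 - p) ^ n * (\<Prod>c\<in>{1..n} - {u}. 1 + real (D c) * (p / (1 - p)))"
proof -
  let ?C = "{1..n} - {u}"
  have "(\<Sum>j\<le>n. real (n choose j) * p ^ j * (1 - p) ^ (n - j) * measure_pmf.prob (rfg n D) {f. six_length f u > j})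
      = (\<Sum>j\<le>n. (1 - p) ^ n * (esym ?C D j * (p / (1 - p)) ^ j))"
  proof (rule sum.cong[OF refl])
    fix j assume "j \<in> {..n}"
    then have j: "j \<le> n" by simp
    have "(1 - p) ^ n = (1 - p) ^ (n - j) * (1 - p) ^ j" using j by (simp add: power_add[symmetric])
    then have h1: "(1 - p) ^ n * (p / (1 - p)) ^ j = p ^ j * (1 - p) ^ (n - j)"
      using p by (simp add: power_divide field_simps)
    have h2: "esym ?C D j = measure_pmf.prob (rfg n D) {f. six_length f u > j} * real (n choose j)"
      using prob_esym[OF n u j] by simp
    have "(1 - p) ^ n * (esym ?C D j * (p / (1 - p)) ^ j) = ((1 - p) ^ n * (p / (1 - p)) ^ j) * esym ?C D j"
      by (simp only: ac_simps)
    also have "\<dots> = (p ^ j * (1 - p) ^ (n - j)) * (measure_pmf.prob (rfg n D) {f. six_length f u > j} * real (n choose j))"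
      unfolding h1 h2 ..
    also have "\<dots> = real (n choose j) * p ^ j * (1 - p) ^ (n - j) * measure_pmf.prob (rfg n D) {f. six_length f u > j}"
      by (simp only: ac_simps)
    finally show "real (n choose j) * p ^ j * (1 - p) ^ (n - j) * measure_pmf.prob (rfg n D) {f. six_length f u > j}
      = (1 - p) ^ n * (esym ?C D j * (p / (1 - p)) ^ j)" by simp
  qed
  also have "\<dots> = (1 - p) ^ n * (\<Sum>j\<le>n. esym ?C D j * (p / (1 - p)) ^ j)" by (simp add: sum_distrib_left)
  also have "\<dots> = (1 - p) ^ n * (\<Prod>c\<in>?C. 1 + real (D c) * (p / (1 - p)))"
    using esym_gen[of ?C n D "p / (1 - p)"] by (simp add: card_Diff_subset_Int u)
  finally show ?thesis .
qed




lemma ln_upper3: assumes "(t::real) \<ge> 0" shows "ln (1 + t) \<le> t - t^2/2 + t^3/3"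
proof -
  let ?g = "\<lambda>s::real. s - s^2/2 + s^3/3 - ln (1 + s)"
  have "?g 0 \<le> ?g t"
  proof (rule DERIV_nonneg_imp_nondecreasing[OF assms])
    fix x :: real assume x0: "0 \<le> x" "x \<le> t"
    then have x: "0 \<le> x \<and> x \<le> t" by simp
    have "(?g has_real_derivative (1 - x + x^2 - 1/(1+x))) (at x)"
      using x by (auto intro!: derivative_eq_intros simp: power2_eq_square)
    moreover have "1 - x + x^2 - 1/(1+x) = x^3/(1+x)" using x
      by (simp add: field_simps power2_eq_square power3_eq_cube)
    moreover have "x^3/(1+x) \<ge> 0" using x by simp
    ultimately show "\<exists>y. (?g has_real_derivative y) (at x) \<and> 0 \<le> y" by auto
  qed
  then show ?thesis by simp
qed

lemma ln_lower2: assumes "(t::real) \<ge> 0" shows "t - t^2/2 \<le> ln (1 + t)"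
proof -
  let ?g = "\<lambda>s::real. ln (1 + s) - s + s^2/2"
  have "?g 0 \<le> ?g t"
  proof (rule DERIV_nonneg_imp_nondecreasing[OF assms])
    fix x :: real assume x0: "0 \<le> x" "x \<le> t"
    then have x: "0 \<le> x \<and> x \<le> t" by simp
    have "(?g has_real_derivative (1/(1+x) - 1 + x)) (at x)"
      using x by (auto intro!: derivative_eq_intros simp: power2_eq_square)
    moreover have "1/(1+x) - 1 + x = x^2/(1+x)" using x
      by (simp add: field_simps power2_eq_square)
    moreover have "x^2/(1+x) \<ge> 0" using x by simp
    ultimately show "\<exists>y. (?g has_real_derivative y) (at x) \<and> 0 \<le> y" by auto
  qed
  then show ?thesis by simp
qed

lemma ln1m_upper: assumes "(p::real) \<ge> 0" "p < 1" shows "ln (1 - p) \<le> - p - p^2/2"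
proof -
  let ?g = "\<lambda>s::real. - s - s^2/2 - ln (1 - s)"
  have "?g 0 \<le> ?g p"
  proof (rule DERIV_nonneg_imp_nondecreasing[OF assms(1)])
    fix x :: real assume x0: "0 \<le> x" "x \<le> p"
    then have x: "0 \<le> x \<and> x \<le> p" by simp
    have "(?g has_real_derivative (- 1 - x + 1/(1-x))) (at x)"
      using x assms by (auto intro!: derivative_eq_intros simp: power2_eq_square)
    moreover have "- 1 - x + 1/(1-x) = x^2/(1-x)" using x assms
      by (simp add: field_simps power2_eq_square)
    moreover have "x^2/(1-x) \<ge> 0" using x assms by simp
    ultimately show "\<exists>y. (?g has_real_derivative y) (at x) \<and> 0 \<le> y" by auto
  qed
  then show ?thesis by simp
qed

lemma ln1m_lower: assumes "(p::real) \<ge> 0" "p \<le> 1/2" shows "- p - p^2/2 - p^3 \<le> ln (1 - p)"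
proof -
  let ?g = "\<lambda>s::real. ln (1 - s) + s + s^2/2 + s^3"
  have "?g 0 \<le> ?g p"
  proof (rule DERIV_nonneg_imp_nondecreasing[OF assms(1)])
    fix x :: real assume x0: "0 \<le> x" "x \<le> p"
    then have x: "0 \<le> x \<and> x \<le> p" by simp
    have "(?g has_real_derivative (- 1/(1-x) + 1 + x + 3 * x^2)) (at x)"
      using x assms by (auto intro!: derivative_eq_intros simp: power2_eq_square)
    moreover have "- 1/(1-x) + 1 + x + 3 * x^2 = x^2 * (2 - 3*x)/(1-x)" using x assms
      by (simp add: field_simps power2_eq_square)
    moreover have "x^2 * (2 - 3*x)/(1-x) \<ge> 0" using x assms by simp
    ultimately show "\<exists>y. (?g has_real_derivative y) (at x) \<and> 0 \<le> y" by auto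
  qed
  then show ?thesis by simp
qed

definition hf :: "real \<Rightarrow> nat \<Rightarrow> real" where
  "hf p a = (1 - p) ^ a * (1 + real a * (p / (1 - p)))"

lemma hf_Suc: "p < 1 \<Longrightarrow> hf p (Suc m) = (1 - p) ^ m * (1 + real m * p)"
  by (simp add: hf_def field_simps)

lemma hf_upper:
  assumes p: "0 \<le> p" "p \<le> 1/2"
  shows "hf p a \<le> exp (- real a * (real a - 1) * p^2 / 2 + real a * (real a - 1)^2 * p^3 / 3)"
proof (cases a)
  case 0 then show ?thesis by (simp add: hf_def)
next
  case (Suc m)
  have pos: "1 - p > 0" "1 + real m * p > 0" using p by (auto intro: add_pos_nonneg)
  have "hf p a = exp (real m * ln (1 - p) + ln (1 + real m * p))"
    using pos p by (simp add: Suc hf_Suc exp_add exp_of_nat_mult)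
  also have "\<dots> \<le> exp (real m * (- p - p^2/2) + (real m * p - (real m * p)^2/2 + (real m * p)^3/3))"
    using ln1m_upper[of p] ln_upper3[of "real m * p"] p
    by (intro exp_mono add_mono mult_left_mono) auto
  also have "\<dots> \<le> exp (- real a * (real a - 1) * p^2 / 2 + real a * (real a - 1)^2 * p^3 / 3)"
  proof (rule exp_mono)
    have h: "real m ^ 3 \<le> (real m + 1) * real m ^ 2"
    proof -
      have "real m * real m ^ 2 \<le> (real m + 1) * real m ^ 2" by (intro mult_right_mono) auto
      then show ?thesis by (simp add: power3_eq_cube power2_eq_square)
    qed
    have "real m ^ 3 * p ^ 3 \<le> (real m + 1) * real m ^ 2 * p ^ 3" using p
      by (intro mult_right_mono[OF h]) auto
    then show "real m * (- p - p^2/2) + (real m * p - (real m * p)^2/2 + (real m * p)^3/3)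
       \<le> - real a * (real a - 1) * p^2 / 2 + real a * (real a - 1)^2 * p^3 / 3"
    proof -
      have eqL: "real m * (- p - p^2/2) + (real m * p - (real m * p)^2/2 + (real m * p)^3/3)
          = -(real m + real m^2)*p^2/2 + real m^3*p^3/3"
        by (simp add: field_simps power2_eq_square power3_eq_cube)
      have eqR: "- real a * (real a - 1) * p^2 / 2 + real a * (real a - 1)^2 * p^3 / 3
          = -(real m + real m^2)*p^2/2 + (real m + 1) * real m ^ 2 * p ^ 3/3"
        by (simp add: Suc field_simps power2_eq_square power3_eq_cube)
      show ?thesis unfolding eqL eqR using \<open>real m ^ 3 * p ^ 3 \<le> (real m + 1) * real m ^ 2 * p ^ 3\<close> by linarith
    qed
  qed
  finally show ?thesis .
qed

lemma hf_lower:
  assumes p: "0 \<le> p" "p \<le> 1/2"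
  shows "exp (- real a * (real a - 1) * p^2 / 2 - real a * (real a - 1) * p^3) \<le> hf p a"
proof (cases a)
  case 0 then show ?thesis by (simp add: hf_def)
next
  case (Suc m)
  have pos: "1 - p > 0" "1 + real m * p > 0" using p by (auto intro: add_pos_nonneg)
  have "exp (- real a * (real a - 1) * p^2 / 2 - real a * (real a - 1) * p^3)
     \<le> exp (real m * (- p - p^2/2 - p^3) + (real m * p - (real m * p)^2/2))"
  proof (rule exp_mono)
    have h: "real m \<le> (real m + 1) * real m" by (simp add: algebra_simps)
    have "real m * p ^ 3 \<le> (real m + 1) * real m * p ^ 3" using p
      by (intro mult_right_mono[OF h]) auto
    then show "- real a * (real a - 1) * p^2 / 2 - real a * (real a - 1) * p^3
      \<le> real m * (- p - p^2/2 - p^3) + (real m * p - (real m * p)^2/2)"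
    proof -
      have eqL: "real m * (- p - p^2/2 - p^3) + (real m * p - (real m * p)^2/2)
          = -(real m + real m^2)*p^2/2 - real m*p^3"
        by (simp add: field_simps power2_eq_square power3_eq_cube)
      have eqR: "- real a * (real a - 1) * p^2 / 2 - real a * (real a - 1) * p^3
          = -(real m + real m^2)*p^2/2 - (real m + 1) * real m * p ^ 3"
        by (simp add: Suc field_simps power2_eq_square power3_eq_cube)
      show ?thesis unfolding eqL eqR using \<open>real m * p ^ 3 \<le> (real m + 1) * real m * p ^ 3\<close> by linarith
    qed
  qed
  also have "\<dots> \<le> exp (real m * ln (1 - p) + ln (1 + real m * p))"
    using ln1m_lower[of p] ln_lower2[of "real m * p"] p
    by (intro exp_mono add_mono mult_left_mono) auto
  also have "\<dots> = hf p a"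
    using pos p by (simp add: Suc hf_Suc exp_add exp_of_nat_mult)
  finally show ?thesis .
qed

lemma binom_m0: "(\<Sum>j\<le>n. real (n choose j) * p ^ j * (1 - p) ^ (n - j)) = 1"
  using binomial_ring[of p "1 - p" n] by simp

lemma binom_m1: "(\<Sum>j\<le>n. real j * (real (n choose j) * p ^ j * (1 - p) ^ (n - j))) = real n * p"
proof (cases n)
  case 0 then show ?thesis by simp
next
  case (Suc m)
  have "(\<Sum>j\<le>Suc m. real j * (real (Suc m choose j) * p ^ j * (1 - p) ^ (Suc m - j)))
      = (\<Sum>i\<le>m. real (Suc i) * (real (Suc m choose Suc i) * p ^ Suc i * (1 - p) ^ (Suc m - Suc i)))"
    by (subst sum.atMost_Suc_shift) simp
  also have "\<dots> = (\<Sum>i\<le>m. (real (Suc m) * p) * (real (m choose i) * p ^ i * (1 - p) ^ (m - i)))"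
  proof (rule sum.cong[OF refl])
    fix i
    have e: "real (Suc i) * real (Suc m choose Suc i) = real (Suc m) * real (m choose i)"
      using Suc_times_binomial[of i m] by (metis of_nat_mult)
    have "real (Suc i) * (real (Suc m choose Suc i) * p ^ Suc i * (1 - p) ^ (Suc m - Suc i))
      = (real (Suc i) * real (Suc m choose Suc i)) * p * (p ^ i * (1 - p) ^ (m - i))"
      by (simp add: mult_ac)
    also have "\<dots> = (real (Suc m) * real (m choose i)) * p * (p ^ i * (1 - p) ^ (m - i))" unfolding e ..
    finally show "real (Suc i) * (real (Suc m choose Suc i) * p ^ Suc i * (1 - p) ^ (Suc m - Suc i))
      = (real (Suc m) * p) * (real (m choose i) * p ^ i * (1 - p) ^ (m - i))"
      by (simp add: mult_ac)
  qed
  also have "\<dots> = real (Suc m) * p" by (simp add: sum_distrib_left[symmetric] binom_m0)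
  finally show ?thesis using Suc by simp
qed

lemma binom_m2: "(\<Sum>j\<le>n. real j * (real j - 1) * (real (n choose j) * p ^ j * (1 - p) ^ (n - j))) = real n * (real n - 1) * p^2"
proof (cases "n \<le> 1")
  case True
  then have "n = 0 \<or> n = 1" by auto
  then show ?thesis by auto
next
  case False
  then obtain m where m: "n = Suc (Suc m)" by (metis One_nat_def not_less_eq_eq Suc_pred' zero_less_Suc not_gr0 le_0_eq)
  have "(\<Sum>j\<le>Suc (Suc m). real j * (real j - 1) * (real (Suc (Suc m) choose j) * p ^ j * (1 - p) ^ (Suc (Suc m) - j)))
      = (\<Sum>i\<le>m. real (Suc (Suc i)) * (real (Suc (Suc i)) - 1) * (real (Suc (Suc m) choose Suc (Suc i)) * p ^ Suc (Suc i) * (1 - p) ^ (Suc (Suc m) - Suc (Suc i))))"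
    by (subst sum.atMost_Suc_shift, subst sum.atMost_Suc_shift) simp
  also have "\<dots> = (\<Sum>i\<le>m. (real (Suc (Suc m)) * real (Suc m) * p^2) * (real (m choose i) * p ^ i * (1 - p) ^ (m - i)))"
  proof (rule sum.cong[OF refl])
    fix i
    have h1: "real (Suc (Suc i)) * real (Suc (Suc m) choose Suc (Suc i)) = real (Suc (Suc m)) * real (Suc m choose Suc i)"
      using Suc_times_binomial[of "Suc i" "Suc m"] by (metis of_nat_mult)
    have h2: "real (Suc i) * real (Suc m choose Suc i) = real (Suc m) * real (m choose i)"
      using Suc_times_binomial[of i m] by (metis of_nat_mult)
    have e1: "real (Suc (Suc i)) - 1 = real (Suc i)" by simp
    have "real (Suc (Suc i)) * (real (Suc (Suc i)) - 1) * real (Suc (Suc m) choose Suc (Suc i))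
       = real (Suc i) * (real (Suc (Suc i)) * real (Suc (Suc m) choose Suc (Suc i)))"
      by (simp only: e1 mult_ac)
    also have "\<dots> = real (Suc i) * (real (Suc (Suc m)) * real (Suc m choose Suc i))" by (simp only: h1)
    also have "\<dots> = real (Suc (Suc m)) * (real (Suc i) * real (Suc m choose Suc i))" by (simp only: mult_ac)
    also have "\<dots> = real (Suc (Suc m)) * (real (Suc m) * real (m choose i))" by (simp only: h2)
    finally have e: "real (Suc (Suc i)) * (real (Suc (Suc i)) - 1) * real (Suc (Suc m) choose Suc (Suc i))
       = real (Suc (Suc m)) * real (Suc m) * real (m choose i)" by (simp only: mult_ac)
    have "real (Suc (Suc i)) * (real (Suc (Suc i)) - 1) * (real (Suc (Suc m) choose Suc (Suc i)) * p ^ Suc (Suc i) * (1 - p) ^ (Suc (Suc m) - Suc (Suc i)))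
      = (real (Suc (Suc i)) * (real (Suc (Suc i)) - 1) * real (Suc (Suc m) choose Suc (Suc i))) * (p * p) * (p ^ i * (1 - p) ^ (m - i))"
      by (simp add: mult_ac)
    also have "\<dots> = (real (Suc (Suc m)) * real (Suc m) * real (m choose i)) * (p * p) * (p ^ i * (1 - p) ^ (m - i))" unfolding e ..
    finally show "real (Suc (Suc i)) * (real (Suc (Suc i)) - 1) * (real (Suc (Suc m) choose Suc (Suc i)) * p ^ Suc (Suc i) * (1 - p) ^ (Suc (Suc m) - Suc (Suc i)))
      = (real (Suc (Suc m)) * real (Suc m) * p^2) * (real (m choose i) * p ^ i * (1 - p) ^ (m - i))"
      by (simp add: mult_ac power2_eq_square)
  qed
  also have "\<dots> = real (Suc (Suc m)) * real (Suc m) * p^2" by (simp add: sum_distrib_left[symmetric] binom_m0)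
  finally show ?thesis using m by simp
qed

lemma binom_var: "(\<Sum>j\<le>n. (real j - real n * p)^2 * (real (n choose j) * p ^ j * (1 - p) ^ (n - j))) = real n * p * (1 - p)"
proof -
  let ?w = "\<lambda>j. real (n choose j) * p ^ j * (1 - p) ^ (n - j)"
  have "(\<Sum>j\<le>n. (real j - real n * p)^2 * ?w j) =
     (\<Sum>j\<le>n. real j * (real j - 1) * ?w j) + (1 - 2 * real n * p) * (\<Sum>j\<le>n. real j * ?w j) + (real n * p)^2 * (\<Sum>j\<le>n. ?w j)"
    by (simp add: sum_distrib_left sum.distrib[symmetric] power2_eq_square algebra_simps)
  also have "\<dots> = real n * p * (1 - p)"
    unfolding binom_m0 binom_m1 binom_m2 by (simp add: power2_eq_square algebra_simps)
  finally show ?thesis .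
qed

lemma binom_cheb:
  assumes "0 \<le> p" "p \<le> 1" "\<delta> > 0"
  shows "(\<Sum>j | j \<le> n \<and> \<delta> \<le> \<bar>real j - real n * p\<bar>. real (n choose j) * p ^ j * (1 - p) ^ (n - j)) \<le> real n * p / \<delta>^2"
proof -
  let ?w = "\<lambda>j. real (n choose j) * p ^ j * (1 - p) ^ (n - j)"
  have w0: "?w j \<ge> 0" for j using assms by simp
  have "(\<Sum>j | j \<le> n \<and> \<delta> \<le> \<bar>real j - real n * p\<bar>. ?w j)
     \<le> (\<Sum>j | j \<le> n \<and> \<delta> \<le> \<bar>real j - real n * p\<bar>. (real j - real n * p)^2 / \<delta>^2 * ?w j)"
  proof (rule sum_mono)
    fix j assume "j \<in> {j. j \<le> n \<and> \<delta> \<le> \<bar>real j - real n * p\<bar>}"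
    then have "\<delta>^2 \<le> (real j - real n * p)^2" using assms
      by (metis (mono_tags, lifting) mem_Collect_eq abs_le_square_iff abs_of_pos)
    then have "1 \<le> (real j - real n * p)^2 / \<delta>^2" using assms by simp
    then show "?w j \<le> (real j - real n * p)^2 / \<delta>^2 * ?w j" using mult_right_mono[OF _ w0[of j]] by (metis mult_1)
  qed
  also have "\<dots> \<le> (\<Sum>j\<le>n. (real j - real n * p)^2 / \<delta>^2 * ?w j)"
    by (rule sum_mono2) (use w0 in auto)
  also have "\<dots> = real n * p * (1 - p) / \<delta>^2"
    using binom_var[of n p] by (simp add: sum_divide_distrib[symmetric] )
  also have "\<dots> \<le> real n * p / \<delta>^2" using assms by (intro divide_right_mono) (auto simp: mult_left_le)
  finally show ?thesis .
qed




locale fg =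
  fixes n :: nat and D :: "nat \<Rightarrow> nat" and u :: nat
  assumes n1: "n \<ge> 1" and sumD: "sum D {1..n} = n" and u: "u \<in> {1..n}"
begin

definition PP :: "nat \<Rightarrow> real" where
  "PP j = measure_pmf.prob (rfg n D) {f. six_length f u > j}"

lemma PP_nonneg: "PP j \<ge> 0" unfolding PP_def by simp
lemma PP_le1: "PP j \<le> 1" unfolding PP_def by simp
lemma PP_mono: "j \<le> j' \<Longrightarrow> PP j' \<le> PP j"
  unfolding PP_def by (intro measure_pmf.finite_measure_mono) auto

abbreviation "w p j \<equiv> real (n choose j) * p ^ j * (1 - p) ^ (n - j)"

lemma w_nonneg: "0 \<le> p \<Longrightarrow> p \<le> 1 \<Longrightarrow> w p j \<ge> 0" by simp

definition Phi :: "real \<Rightarrow> real" where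
  "Phi p = (\<Sum>j\<le>n. w p j * PP j)"

lemma Phi_eq:
  assumes "0 \<le> p" "p < 1"
  shows "Phi p = (1 - p) ^ D u * (\<Prod>c\<in>{1..n} - {u}. hf p (D c))"
proof -
  have "Phi p = (1 - p) ^ n * (\<Prod>c\<in>{1..n} - {u}. 1 + real (D c) * (p / (1 - p)))"
    unfolding Phi_def PP_def using gen_identity[OF sumD u assms] by simp
  also have "(1 - p) ^ n = (1 - p) ^ D u * (\<Prod>c\<in>{1..n} - {u}. (1 - p) ^ D c)"
  proof -
    have "n = D u + (\<Sum>c\<in>{1..n} - {u}. D c)" using sumD sum.remove[of "{1..n}" u D] u by simp
    then have "(1 - p) ^ n = (1 - p) ^ (D u + (\<Sum>c\<in>{1..n} - {u}. D c))" by simp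
    then show ?thesis by (simp add: power_add power_sum)
  qed
  finally show ?thesis by (simp add: hf_def prod.distrib mult.assoc)
qed

definition sig :: real where "sig = sigma2 n D"
definition Dl :: real where "Dl = real (Delta n D)"

lemma D_le: "c \<in> {1..n} \<Longrightarrow> real (D c) \<le> Dl"
  unfolding Dl_def Delta_def by simp

lemma sumV: "(\<Sum>c\<in>{1..n}. real (D c) * (real (D c) - 1)) = real n * sig"
proof -
  have "(\<Sum>c\<in>{1..n}. real (D c) * (real (D c) - 1)) = (\<Sum>c\<in>{1..n}. real (D c ^ 2)) - (\<Sum>c\<in>{1..n}. real (D c))"
    by (simp add: sum_subtractf algebra_simps power2_eq_square)
  also have "\<dots> = real (moment 2 n D) - real n"
  proof -
    have "(\<Sum>c\<in>{1..n}. real (D c)) = real n" using sumD by (metis of_nat_sum)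
    moreover have "(\<Sum>c\<in>{1..n}. real (D c ^ 2)) = real (moment 2 n D)" unfolding moment_def by (metis of_nat_sum)
    ultimately show ?thesis by simp
  qed
  also have "\<dots> = real n * sig" unfolding sig_def sigma2_def using n1 by (simp add: field_simps)
  finally show ?thesis .
qed

definition SS :: real where "SS = (\<Sum>c\<in>{1..n} - {u}. real (D c) * (real (D c) - 1))"

lemma dd_nonneg: "real (a::nat) * (real a - 1) \<ge> 0"
  by (cases a) auto

lemma SS_eq: "SS = real n * sig - real (D u) * (real (D u) - 1)"
  unfolding SS_def sumV[symmetric] using sum.remove[of "{1..n}" u "\<lambda>c. real (D c) * (real (D c) - 1)"] u by simp

lemma SS_le: "SS \<le> real n * sig" using SS_eq dd_nonneg[of "D u"] by simp

lemma SS_ge: "SS \<ge> real n * sig - Dl^2"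
proof -
  have "real (D u) * (real (D u) - 1) \<le> Dl * Dl"
  proof (cases "D u = 0")
    case True then show ?thesis by simp
  next
    case False then show ?thesis using D_le[OF u] by (intro mult_mono) auto
  qed
  then show ?thesis using SS_eq by (simp add: power2_eq_square)
qed

lemma SS_nonneg: "SS \<ge> 0" unfolding SS_def by (intro sum_nonneg) (simp add: dd_nonneg)

lemma Dl_nonneg: "Dl \<ge> 0" unfolding Dl_def by simp

lemma Phi_upper:
  assumes p: "0 \<le> p" "p \<le> 1/2"
  shows "Phi p \<le> exp (- (p^2) * (real n * sig) / 2 + p^2 * Dl^2 / 2 + p^3 * Dl * (real n * sig) / 3)"
proof -
  let ?C = "{1..n} - {u}"
  have p1: "p < 1" using p by simp
  have hp: "\<And>c. hf p (D c) \<ge> 0" using p by (simp add: hf_def)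
  have "Phi p \<le> (\<Prod>c\<in>?C. hf p (D c))"
    unfolding Phi_eq[OF p(1) p1] using p
    by (intro mult_left_le_one_le prod_nonneg hp) (auto intro: power_le_one)
  also have "\<dots> \<le> (\<Prod>c\<in>?C. exp (- real (D c) * (real (D c) - 1) * p^2 / 2 + real (D c) * (real (D c) - 1)^2 * p^3 / 3))"
    by (intro prod_mono conjI hp hf_upper p)
  also have "\<dots> = exp (\<Sum>c\<in>?C. - real (D c) * (real (D c) - 1) * p^2 / 2 + real (D c) * (real (D c) - 1)^2 * p^3 / 3)"
    by (simp add: exp_sum)
  also have "\<dots> \<le> exp (- (p^2) * SS / 2 + p^3 * Dl * SS / 3)"
  proof (rule exp_mono)
    have "(\<Sum>c\<in>?C. real (D c) * (real (D c) - 1)^2) \<le> (\<Sum>c\<in>?C. Dl * (real (D c) * (real (D c) - 1)))"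
    proof (rule sum_mono)
      fix c assume c: "c \<in> ?C"
      have "real (D c) - 1 \<le> Dl" using D_le[of c] c by simp
      then show "real (D c) * (real (D c) - 1)^2 \<le> Dl * (real (D c) * (real (D c) - 1))"
      proof -
        have "(real (D c) - 1) * (real (D c) * (real (D c) - 1)) \<le> Dl * (real (D c) * (real (D c) - 1))"
          using dd_nonneg[of "D c"] \<open>real (D c) - 1 \<le> Dl\<close> by (intro mult_right_mono) auto
        then show ?thesis by (simp add: power2_eq_square mult_ac)
      qed
    qed
    then have "(\<Sum>c\<in>?C. real (D c) * (real (D c) - 1)^2) \<le> Dl * SS" unfolding SS_def by (simp add: sum_distrib_left)
    then have "p^3 * (\<Sum>c\<in>?C. real (D c) * (real (D c) - 1)^2) \<le> p^3 * (Dl * SS)" using p by (intro mult_left_mono) auto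
    moreover have "(\<Sum>c\<in>?C. - real (D c) * (real (D c) - 1) * p^2 / 2 + real (D c) * (real (D c) - 1)^2 * p^3 / 3)
       = - (p^2) * SS / 2 + p^3 * (\<Sum>c\<in>?C. real (D c) * (real (D c) - 1)^2) / 3"
      unfolding SS_def by (simp add: sum.distrib sum_distrib_left sum_divide_distrib[symmetric] algebra_simps)
    ultimately show "(\<Sum>c\<in>?C. - real (D c) * (real (D c) - 1) * p^2 / 2 + real (D c) * (real (D c) - 1)^2 * p^3 / 3)
       \<le> - (p^2) * SS / 2 + p^3 * Dl * SS / 3" by (simp add: mult.assoc)
  qed
  also have "\<dots> \<le> exp (- (p^2) * (real n * sig) / 2 + p^2 * Dl^2 / 2 + p^3 * Dl * (real n * sig) / 3)"
  proof (rule exp_mono)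
    have "p^2 * (real n * sig - Dl^2) \<le> p^2 * SS" using SS_ge p by (intro mult_left_mono) auto
    moreover have "p^3 * Dl * SS \<le> p^3 * Dl * (real n * sig)" using SS_le p Dl_nonneg by (intro mult_left_mono) auto
    ultimately show "- (p^2) * SS / 2 + p^3 * Dl * SS / 3 \<le> - (p^2) * (real n * sig) / 2 + p^2 * Dl^2 / 2 + p^3 * Dl * (real n * sig) / 3"
      by (simp add: algebra_simps)
  qed
  finally show ?thesis .
qed

lemma Phi_lower:
  assumes p: "0 \<le> p" "p \<le> 1/2"
  shows "(1 - p * Dl) * exp (- (p^2) * (real n * sig) / 2 - (p^3) * (real n * sig)) \<le> Phi p"
proof -
  let ?C = "{1..n} - {u}"
  have p1: "p < 1" using p by simp
  have "exp (- (p^2) * (real n * sig) / 2 - (p^3) * (real n * sig)) \<le> exp (- (p^2) * SS / 2 - (p^3) * SS)"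
  proof (rule exp_mono)
    have "p^2 * SS \<le> p^2 * (real n * sig)" "p^3 * SS \<le> p^3 * (real n * sig)"
      using SS_le p by (intro mult_left_mono; simp)+
    then show "- (p^2) * (real n * sig) / 2 - (p^3) * (real n * sig) \<le> - (p^2) * SS / 2 - (p^3) * SS" by simp
  qed
  also have "exp (- (p^2) * SS / 2 - (p^3) * SS) = (\<Prod>c\<in>?C. exp (- real (D c) * (real (D c) - 1) * p^2 / 2 - real (D c) * (real (D c) - 1) * p^3))"
  proof -
    have "- (p^2) * SS / 2 - (p^3) * SS = (\<Sum>c\<in>?C. - real (D c) * (real (D c) - 1) * p^2 / 2 - real (D c) * (real (D c) - 1) * p^3)"
    proof -
      have "(\<Sum>c\<in>?C. - real (D c) * (real (D c) - 1) * p^2 / 2 - real (D c) * (real (D c) - 1) * p^3)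
          = (\<Sum>c\<in>?C. (real (D c) * (real (D c) - 1)) * (- (p^2) / 2 - p^3))"
        by (rule sum.cong) (simp_all add: field_simps)
      also have "\<dots> = SS * (- (p^2) / 2 - p^3)" unfolding SS_def by (simp add: sum_distrib_right)
      finally show ?thesis by (simp add: field_simps)
    qed
    then show ?thesis by (simp add: exp_sum)
  qed
  also have "\<dots> \<le> (\<Prod>c\<in>?C. hf p (D c))"
    by (intro prod_mono conjI hf_lower p) simp
  finally have A: "exp (- (p^2) * (real n * sig) / 2 - (p^3) * (real n * sig)) \<le> (\<Prod>c\<in>?C. hf p (D c))" .
  have B: "1 - p * Dl \<le> (1 - p) ^ D u"
  proof -
    have "1 + real (D u) * (- p) \<le> (1 + - p) ^ D u" using p by (intro Bernoulli_inequality) simp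
    moreover have "p * real (D u) \<le> p * Dl" using D_le[OF u] p by (intro mult_left_mono) auto
    ultimately show ?thesis by (simp add: algebra_simps)
  qed
  have "(1 - p * Dl) * exp (- (p^2) * (real n * sig) / 2 - (p^3) * (real n * sig)) \<le> (1 - p) ^ D u * (\<Prod>c\<in>?C. hf p (D c))"
    using A B p by (intro mult_mono) auto
  then show ?thesis unfolding Phi_eq[OF p(1) p1] .
qed

lemma PP_upper:
  assumes p: "0 \<le> p" "p \<le> 1/2" and k: "real k > real n * p"
  shows "PP k * (1 - real n * p / (real k - real n * p)^2) \<le> Phi p"
proof -
  let ?d = "real k - real n * p"
  have w0: "\<And>j. w p j \<ge> 0" using p by simp
  have "(\<Sum>j | j \<le> n \<and> k < j. w p j) \<le> (\<Sum>j | j \<le> n \<and> ?d \<le> \<bar>real j - real n * p\<bar>. w p j)"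
    by (rule sum_mono2) (use w0 in auto)
  also have "\<dots> \<le> real n * p / ?d^2" using k p by (intro binom_cheb) auto
  finally have t: "(\<Sum>j | j \<le> n \<and> k < j. w p j) \<le> real n * p / ?d^2" .
  have split: "(\<Sum>j\<le>n. w p j) = (\<Sum>j | j \<le> n \<and> j \<le> k. w p j) + (\<Sum>j | j \<le> n \<and> k < j. w p j)"
  proof -
    have fin: "finite {j. j \<le> n \<and> j \<le> k}" "finite {j. j \<le> n \<and> k < j}" by auto
    have "{..n} = {j. j \<le> n \<and> j \<le> k} \<union> {j. j \<le> n \<and> k < j}" by auto
    moreover have dis: "{j. j \<le> n \<and> j \<le> k} \<inter> {j. j \<le> n \<and> k < j} = {}" by auto
    ultimately show ?thesis using sum.union_disjoint[OF fin dis, of "\<lambda>j. w p j"] by simp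
  qed
  have lo: "1 - real n * p / ?d^2 \<le> (\<Sum>j | j \<le> n \<and> j \<le> k. w p j)"
    using split t binom_m0[of n p] by simp
  have "PP k * (1 - real n * p / ?d^2) \<le> PP k * (\<Sum>j | j \<le> n \<and> j \<le> k. w p j)"
    by (intro mult_left_mono lo PP_nonneg)
  also have "\<dots> = (\<Sum>j | j \<le> n \<and> j \<le> k. w p j * PP k)" by (simp add: sum_distrib_left mult.commute)
  also have "\<dots> \<le> (\<Sum>j | j \<le> n \<and> j \<le> k. w p j * PP j)"
    by (intro sum_mono mult_left_mono PP_mono w0) auto
  also have "\<dots> \<le> Phi p" unfolding Phi_def
    by (rule sum_mono2) (use w0 PP_nonneg in auto)
  finally show ?thesis .
qed

lemma PP_lower:
  assumes p: "0 \<le> p" "p \<le> 1/2" and k: "real k < real n * p"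
  shows "Phi p - real n * p / (real n * p - real k)^2 \<le> PP k"
proof -
  let ?d = "real n * p - real k"
  have w0: "\<And>j. w p j \<ge> 0" using p by simp
  have "(\<Sum>j | j \<le> n \<and> j < k. w p j) \<le> (\<Sum>j | j \<le> n \<and> ?d \<le> \<bar>real j - real n * p\<bar>. w p j)"
    by (rule sum_mono2) (use w0 in auto)
  also have "\<dots> \<le> real n * p / ?d^2" using k p by (intro binom_cheb) auto
  finally have t: "(\<Sum>j | j \<le> n \<and> j < k. w p j) \<le> real n * p / ?d^2" .
  have split: "Phi p = (\<Sum>j | j \<le> n \<and> j < k. w p j * PP j) + (\<Sum>j | j \<le> n \<and> \<not> j < k. w p j * PP j)"
  proof -
    have fin: "finite {j. j \<le> n \<and> j < k}" "finite {j. j \<le> n \<and> \<not> j < k}" by auto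
    have "{..n} = {j. j \<le> n \<and> j < k} \<union> {j. j \<le> n \<and> \<not> j < k}" by auto
    then show ?thesis unfolding Phi_def using sum.union_disjoint[OF fin, of "\<lambda>j. w p j * PP j"] by auto
  qed
  have a: "(\<Sum>j | j \<le> n \<and> j < k. w p j * PP j) \<le> (\<Sum>j | j \<le> n \<and> j < k. w p j)"
    by (intro sum_mono mult_right_le_one_le w0 PP_nonneg PP_le1)
  have "(\<Sum>j | j \<le> n \<and> \<not> j < k. w p j * PP j) \<le> (\<Sum>j | j \<le> n \<and> \<not> j < k. w p j * PP k)"
    by (intro sum_mono mult_left_mono PP_mono w0) auto
  also have "\<dots> = PP k * (\<Sum>j | j \<le> n \<and> \<not> j < k. w p j)" by (simp add: sum_distrib_left mult.commute)
  also have "\<dots> \<le> PP k * 1"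
  proof (intro mult_left_mono PP_nonneg)
    have "(\<Sum>j | j \<le> n \<and> \<not> j < k. w p j) \<le> (\<Sum>j\<le>n. w p j)" by (rule sum_mono2) (use w0 in auto)
    then show "(\<Sum>j | j \<le> n \<and> \<not> j < k. w p j) \<le> 1" using binom_m0[of n p] by simp
  qed
  finally have b: "(\<Sum>j | j \<le> n \<and> \<not> j < k. w p j * PP j) \<le> PP k" by simp
  show ?thesis using split a b t by linarith
qed

end




lemma squeeze_eps:
  fixes a :: "nat \<Rightarrow> real" and \<mu> :: real
  assumes U: "\<And>\<epsilon>. 0 < \<epsilon> \<Longrightarrow> \<epsilon> < 1 \<Longrightarrow> \<exists>U. U \<longlonglongrightarrow> exp (- ((1 - \<epsilon>)^2 * \<mu>)) \<and> eventually (\<lambda>n. a n \<le> U n) sequentially"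
      and L: "\<And>\<epsilon>. 0 < \<epsilon> \<Longrightarrow> \<epsilon> < 1 \<Longrightarrow> \<exists>L. L \<longlonglongrightarrow> exp (- ((1 + \<epsilon>)^2 * \<mu>)) \<and> eventually (\<lambda>n. L n \<le> a n) sequentially"
  shows "a \<longlonglongrightarrow> exp (- \<mu>)"
proof (rule order_tendstoI)
  fix y assume y: "y > exp (- \<mu>)"
  have "((\<lambda>\<epsilon>. exp (- ((1 - \<epsilon>)^2 * \<mu>))) \<longlongrightarrow> exp (- ((1 - 0)^2 * \<mu>))) (at_right 0)"
    by (intro tendsto_intros)
  then have "eventually (\<lambda>\<epsilon>. exp (- ((1 - \<epsilon>)^2 * \<mu>)) < y) (at_right (0::real))"
    using y by (intro order_tendstoD(2)) auto
  moreover have "eventually (\<lambda>\<epsilon>. 0 < \<epsilon>) (at_right (0::real))" by (rule eventually_at_right_less)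
  moreover have "eventually (\<lambda>\<epsilon>. \<epsilon> < 1) (at_right (0::real))"
    using eventually_at_right_real[of 0 1] by (simp add: eventually_mono)
  ultimately have "eventually (\<lambda>\<epsilon>. exp (- ((1 - \<epsilon>)^2 * \<mu>)) < y \<and> 0 < \<epsilon> \<and> \<epsilon> < 1) (at_right (0::real))"
    by eventually_elim auto
  then obtain \<epsilon> where e: "exp (- ((1 - \<epsilon>)^2 * \<mu>)) < y" "0 < \<epsilon>" "\<epsilon> < 1"
    using eventually_happens'[of "at_right (0::real)"] by fastforce
  obtain Uf where Uf: "Uf \<longlonglongrightarrow> exp (- ((1 - \<epsilon>)^2 * \<mu>))" "eventually (\<lambda>n. a n \<le> Uf n) sequentially"
    using U[OF e(2,3)] by blast
  have "eventually (\<lambda>n. Uf n < y) sequentially" using order_tendstoD(2)[OF Uf(1) e(1)] .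
  with Uf(2) show "eventually (\<lambda>n. a n < y) sequentially" by eventually_elim auto
next
  fix y assume y: "y < exp (- \<mu>)"
  have "((\<lambda>\<epsilon>. exp (- ((1 + \<epsilon>)^2 * \<mu>))) \<longlongrightarrow> exp (- ((1 + 0)^2 * \<mu>))) (at_right 0)"
    by (intro tendsto_intros)
  then have "eventually (\<lambda>\<epsilon>. y < exp (- ((1 + \<epsilon>)^2 * \<mu>))) (at_right (0::real))"
    using y by (intro order_tendstoD(1)) auto
  moreover have "eventually (\<lambda>\<epsilon>. 0 < \<epsilon>) (at_right (0::real))" by (rule eventually_at_right_less)
  moreover have "eventually (\<lambda>\<epsilon>. \<epsilon> < 1) (at_right (0::real))"
    using eventually_at_right_real[of 0 1] by (simp add: eventually_mono)
  ultimately have "eventually (\<lambda>\<epsilon>. y < exp (- ((1 + \<epsilon>)^2 * \<mu>)) \<and> 0 < \<epsilon> \<and> \<epsilon> < 1) (at_right (0::real))"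
    by eventually_elim auto
  then obtain \<epsilon> where e: "y < exp (- ((1 + \<epsilon>)^2 * \<mu>))" "0 < \<epsilon>" "\<epsilon> < 1"
    using eventually_happens'[of "at_right (0::real)"] by fastforce
  obtain Lf where Lf: "Lf \<longlonglongrightarrow> exp (- ((1 + \<epsilon>)^2 * \<mu>))" "eventually (\<lambda>n. Lf n \<le> a n) sequentially"
    using L[OF e(2,3)] by blast
  have "eventually (\<lambda>n. y < Lf n) sequentially" using order_tendstoD(1)[OF Lf(1) e(1)] .
  with Lf(2) show "eventually (\<lambda>n. y < a n) sequentially" by eventually_elim auto
qed

lemma real_gt_floor_iff:
  assumes "t \<ge> 0" shows "(real s > t) \<longleftrightarrow> (s > nat \<lfloor>t\<rfloor>)"
proof -
  have "0 \<le> \<lfloor>t\<rfloor>" using assms by simp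
  then have "(s > nat \<lfloor>t\<rfloor>) \<longleftrightarrow> \<lfloor>t\<rfloor> < int s" by (simp add: nat_less_iff)
  also have "\<dots> \<longleftrightarrow> t < real s" by (simp add: floor_less_iff)
  finally show ?thesis by simp
qed




theorem theorem2p1:
  fixes d :: "nat \<Rightarrow> nat \<Rightarrow> nat" and v :: "nat \<Rightarrow> nat"
  assumes deg: "\<And>n. n \<ge> 1 \<Longrightarrow> is_degree_seq n (d n)"
    and vert: "\<And>n. n \<ge> 1 \<Longrightarrow> v n \<in> {1..n}"
    and sig_o: "(\<lambda>n. sigma2 n (d n)) \<in> o(\<lambda>n. real n)"
    and sig_omega: "(\<lambda>n. 1 / real n) \<in> o(\<lambda>n. sigma2 n (d n))"
    and Delta_o: "(\<lambda>n. real (Delta n (d n))) \<in> o(\<lambda>n. sqrt (real n * sigma2 n (d n)))"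
  shows "\<forall>x::real > 0.
     (\<lambda>n. measure_pmf.prob (rfg n (d n))
        {f. real (six_length f (v n)) > x * sqrt (real n / sigma2 n (d n))})
     \<longlonglongrightarrow> exp (- (x\<^sup>2) / 2)"
proof (intro allI impI)
  fix x :: real assume x: "x > 0"
  define \<sigma> where "\<sigma> n = sigma2 n (d n)" for n
  define \<Delta> where "\<Delta> n = real (Delta n (d n))" for n
  define t where "t n = x * sqrt (real n / \<sigma> n)" for n
  define k where "k n = nat \<lfloor>t n\<rfloor>" for n
  define a where "a n = measure_pmf.prob (rfg n (d n)) {f. k n < six_length f (v n)}" for n
  have fgn: "fg n (d n) (v n)" if "n \<ge> 1" for n
    using that deg[OF that] vert[OF that] by unfold_locales (auto simp: is_degree_seq_def)
  have a_eq: "a n = fg.PP n (d n) (v n) (k n)" if "n \<ge> 1" for n unfolding a_def fg.PP_def[OF fgn[OF that]] ..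
  have ev1: "eventually (\<lambda>n. n \<ge> 1) sequentially" by (rule eventually_ge_at_top)
  have \<sigma>nn: "\<sigma> n \<ge> 0" if "n \<ge> 1" for n
  proof -
    interpret fg n "d n" "v n" using fgn[OF that] .
    have "real n * sig \<ge> 0" unfolding sumV[symmetric] by (intro sum_nonneg) (simp add: dd_nonneg)
    then show ?thesis using that by (simp add: \<sigma>_def sig_def zero_le_mult_iff)
  qed
  have t0: "t n \<ge> 0" for n
  proof (cases "n = 0")
    case True then show ?thesis by (simp add: t_def)
  next
    case False then show ?thesis using \<sigma>nn[of n] x by (simp add: t_def)
  qed
  have goal_eq: "measure_pmf.prob (rfg n (d n)) {f. real (six_length f (v n)) > x * sqrt (real n / sigma2 n (d n))} = a n" for n
    unfolding a_def k_def using real_gt_floor_iff[OF t0[of n]] by (simp add: t_def \<sigma>_def)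
  have \<sigma>pos: "eventually (\<lambda>n. \<sigma> n > 0) sequentially"
  proof -
    have "eventually (\<lambda>n. norm (1 / real n) \<le> 1 * norm (sigma2 n (d n))) sequentially"
      using landau_o.smallD[OF sig_omega zero_less_one] .
    with ev1 show ?thesis
    proof eventually_elim
      case (elim n)
      then have "\<sigma> n \<noteq> 0" by (auto simp: \<sigma>_def)
      then show ?case using \<sigma>nn[OF elim(1)] by simp
    qed
  qed
  have ev: "eventually (\<lambda>n. n \<ge> 1 \<and> \<sigma> n > 0) sequentially" using ev1 \<sigma>pos by eventually_elim auto
  have n\<sigma>_top: "filterlim (\<lambda>n. real n * \<sigma> n) at_top sequentially"
  proof -
    have "((\<lambda>n. (1 / real n) / sigma2 n (d n)) \<longlongrightarrow> 0) sequentially" by (rule smalloD_tendsto[OF sig_omega])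
    then have "((\<lambda>n. inverse (real n * \<sigma> n)) \<longlongrightarrow> 0) sequentially" by (simp add: \<sigma>_def field_simps)
    moreover have "eventually (\<lambda>n. 0 < inverse (real n * \<sigma> n)) sequentially" using ev by eventually_elim simp
    ultimately have "filterlim (\<lambda>n. inverse (inverse (real n * \<sigma> n))) at_top sequentially"
      by (rule filterlim_inverse_at_top)
    then show ?thesis by simp
  qed
  have t_top: "filterlim t at_top sequentially"
  proof -
    have "((\<lambda>n. sigma2 n (d n) / real n) \<longlongrightarrow> 0) sequentially" by (rule smalloD_tendsto[OF sig_o])
    then have "((\<lambda>n. inverse (real n / \<sigma> n)) \<longlongrightarrow> 0) sequentially" by (simp add: \<sigma>_def)
    moreover have "eventually (\<lambda>n. 0 < inverse (real n / \<sigma> n)) sequentially" using ev by eventually_elim simp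
    ultimately have "filterlim (\<lambda>n. inverse (inverse (real n / \<sigma> n))) at_top sequentially"
      by (rule filterlim_inverse_at_top)
    then have "filterlim (\<lambda>n. real n / \<sigma> n) at_top sequentially" by simp
    then have "filterlim (\<lambda>n. sqrt (real n / \<sigma> n)) at_top sequentially"
      by (rule filterlim_compose[OF sqrt_at_top])
    then show ?thesis unfolding t_def
      by (rule filterlim_tendsto_pos_mult_at_top[OF tendsto_const x])
  qed
  have DD: "((\<lambda>n. \<Delta> n / sqrt (real n * \<sigma> n)) \<longlongrightarrow> 0) sequentially"
    using smalloD_tendsto[OF Delta_o] by (simp add: \<Delta>_def \<sigma>_def)
  have sq_inf: "filterlim (\<lambda>n. sqrt (real n * \<sigma> n)) at_infinity sequentially"
    by (rule filterlim_at_top_imp_at_infinity, rule filterlim_compose[OF sqrt_at_top n\<sigma>_top])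
  define p where "p \<theta> n = \<theta> * x / sqrt (real n * \<sigma> n)" for \<theta> n
  have p0: "(p \<theta> \<longlongrightarrow> 0) sequentially" for \<theta>
    unfolding p_def by (rule tendsto_divide_0[OF tendsto_const sq_inf])
  have pD: "((\<lambda>n. p \<theta> n * \<Delta> n) \<longlongrightarrow> 0) sequentially" for \<theta>
  proof -
    have "((\<lambda>n. (\<theta> * x) * (\<Delta> n / sqrt (real n * \<sigma> n))) \<longlongrightarrow> (\<theta> * x) * 0) sequentially"
      by (intro tendsto_mult tendsto_const DD)
    then show ?thesis by (simp add: p_def)
  qed
  have pid: "real n * p \<theta> n = \<theta> * t n \<and> p \<theta> n ^ 2 * (real n * \<sigma> n) = \<theta>^2 * x^2"
    if n: "n \<ge> 1" "\<sigma> n > 0" for \<theta> n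
  proof
    have pos: "real n * \<sigma> n > 0" using n by simp
    have "sqrt (real n / \<sigma> n) * sqrt (real n * \<sigma> n) = real n"
      using n by (simp add: real_sqrt_mult[symmetric])
    moreover have sp: "sqrt (real n * \<sigma> n) > 0" using pos by simp
    ultimately have "sqrt (real n / \<sigma> n) = real n / sqrt (real n * \<sigma> n)" by (simp add: eq_divide_eq mult.commute)
    then show "real n * p \<theta> n = \<theta> * t n" by (simp add: p_def t_def)
    show "p \<theta> n ^ 2 * (real n * \<sigma> n) = \<theta>^2 * x^2"
    proof -
      have s2: "(sqrt (real n * \<sigma> n))^2 = real n * \<sigma> n" using pos by simp
      have nz: "real n * \<sigma> n \<noteq> 0" using pos by linarith
      have "\<And>a c::real. c \<noteq> 0 \<Longrightarrow> a / c * c = a" by simp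
      from this[OF nz] show ?thesis unfolding p_def power_divide power_mult_distrib s2 .
    qed
  qed
  have n\<sigma>nn: "real n * \<sigma> n \<ge> 0" for n
    using \<sigma>nn[of n] by (cases "n = 0") auto
  have pnn: "\<theta> \<ge> 0 \<Longrightarrow> p \<theta> n \<ge> 0" for \<theta> n unfolding p_def
    by (intro divide_nonneg_nonneg mult_nonneg_nonneg) (use x n\<sigma>nn[of n] in auto)
  show "(\<lambda>n. measure_pmf.prob (rfg n (d n))
        {f. real (six_length f (v n)) > x * sqrt (real n / sigma2 n (d n))})
     \<longlonglongrightarrow> exp (- (x\<^sup>2) / 2)"
    unfolding goal_eq
  proof -
    have "a \<longlonglongrightarrow> exp (- (x^2 / 2))"
    proof (rule squeeze_eps)
      fix \<epsilon> :: real assume e: "0 < \<epsilon>" "\<epsilon> < 1"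
      define \<theta> where "\<theta> = 1 - \<epsilon>"
      have th: "0 < \<theta>" unfolding \<theta>_def using e by simp
      define r where "r n = \<theta> * t n / (\<epsilon> * t n - 1)^2" for n
      define E where "E n = exp (- (\<theta>^2 * x^2) / 2 + (p \<theta> n * \<Delta> n)^2 / 2 + (p \<theta> n * \<Delta> n) * (\<theta>^2 * x^2) / 3)" for n
      have r0: "r \<longlonglongrightarrow> 0"
      proof (rule tendsto_sandwich)
        have "eventually (\<lambda>n. t n \<ge> 2 / \<epsilon>) sequentially" using t_top by (simp add: filterlim_at_top)
        then show "eventually (\<lambda>n. r n \<le> 4 * \<theta> / \<epsilon>^2 / t n) sequentially"
        proof eventually_elim
          case (elim n)
          have tp: "t n > 0" using elim e by (smt (verit) divide_pos_pos)
          have h: "\<epsilon> * t n - 1 \<ge> \<epsilon> * t n / 2" using elim e by (simp add: field_simps)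
          have "(\<epsilon> * t n / 2)^2 \<le> (\<epsilon> * t n - 1)^2" using h e tp by (intro power_mono) auto
          moreover have "\<epsilon> * t n / 2 > 0" using e tp by simp
          moreover have "\<epsilon> * t n - 1 > 0" using h e tp by simp
          ultimately have "r n \<le> \<theta> * t n / (\<epsilon> * t n / 2)^2" unfolding r_def using th tp e
            by (intro divide_left_mono mult_pos_pos) auto
          also have "\<dots> = 4 * \<theta> / \<epsilon>^2 / t n" using tp e by (simp add: field_simps power2_eq_square)
          finally show ?case .
        qed
        show "eventually (\<lambda>n. 0 \<le> r n) sequentially" unfolding r_def using th t0
          by (intro always_eventually allI divide_nonneg_nonneg) auto
        show "(\<lambda>n. 0) \<longlonglongrightarrow> 0" by simp
        show "(\<lambda>n. 4 * \<theta> / \<epsilon>^2 / t n) \<longlonglongrightarrow> 0"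
          by (rule tendsto_divide_0[OF tendsto_const filterlim_at_top_imp_at_infinity[OF t_top]])
      qed
      have Elim: "E \<longlonglongrightarrow> exp (- (\<theta>^2 * x^2) / 2 + 0^2 / 2 + 0 * (\<theta>^2 * x^2) / 3)"
        unfolding E_def by (intro tendsto_intros pD) auto
      show "\<exists>U. U \<longlonglongrightarrow> exp (- ((1 - \<epsilon>)^2 * (x^2 / 2))) \<and> eventually (\<lambda>n. a n \<le> U n) sequentially"
      proof (intro exI conjI)
        have "(\<lambda>n. E n / (1 - r n)) \<longlonglongrightarrow> exp (- (\<theta>^2 * x^2) / 2 + 0^2 / 2 + 0 * (\<theta>^2 * x^2) / 3) / (1 - 0)"
          by (intro tendsto_intros Elim r0) simp
        then show "(\<lambda>n. E n / (1 - r n)) \<longlonglongrightarrow> exp (- ((1 - \<epsilon>)^2 * (x^2 / 2)))"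
          by (simp add: \<theta>_def)
        have ev2: "eventually (\<lambda>n. p \<theta> n \<le> 1/2) sequentially"
          using order_tendstoD(2)[OF p0[of \<theta>], of "1/2"] by (simp add: eventually_mono)
        have ev3: "eventually (\<lambda>n. t n > 2 / \<epsilon>) sequentially" using t_top by (simp add: filterlim_at_top_dense)
        have ev4: "eventually (\<lambda>n. r n < 1) sequentially" using order_tendstoD(2)[OF r0, of 1] by simp
        show "eventually (\<lambda>n. a n \<le> E n / (1 - r n)) sequentially"
          using ev ev2 ev3 ev4
        proof eventually_elim
          case (elim n)
          interpret fg n "d n" "v n" using fgn elim by simp
          have aq: "a n = PP (k n)" using a_eq elim by simp
          have tp: "t n > 0" using elim e by (smt (verit) divide_pos_pos)
          have pi: "real n * p \<theta> n = \<theta> * t n" "p \<theta> n ^ 2 * (real n * \<sigma> n) = \<theta>^2 * x^2"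
            using pid[of n \<theta>] elim by auto
          have kt: "real (k n) > t n - 1"
          proof -
            have "real (k n) = real_of_int \<lfloor>t n\<rfloor>" unfolding k_def using t0[of n] by simp
            moreover have "t n < real_of_int \<lfloor>t n\<rfloor> + 1" using floor_correct[of "t n"] by simp
            ultimately show ?thesis by simp
          qed
          have et: "\<epsilon> * t n - 1 > 0" using elim e by (simp add: field_simps)
          have kd: "real (k n) - real n * p \<theta> n \<ge> \<epsilon> * t n - 1" using kt pi unfolding \<theta>_def by (simp add: algebra_simps)
          have kgt: "real (k n) > real n * p \<theta> n" using kd et by simp
          have p_ok: "0 \<le> p \<theta> n" "p \<theta> n \<le> 1/2" using pnn th elim by auto
          have A: "PP (k n) * (1 - real n * p \<theta> n / (real (k n) - real n * p \<theta> n)^2) \<le> Phi (p \<theta> n)"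
            by (rule PP_upper[OF p_ok kgt])
          have B: "Phi (p \<theta> n) \<le> E n"
          proof -
            have "Phi (p \<theta> n) \<le> exp (- (p \<theta> n ^2) * (real n * sig) / 2 + p \<theta> n^2 * Dl^2 / 2 + p \<theta> n^3 * Dl * (real n * sig) / 3)"
              by (rule Phi_upper[OF p_ok])
            also have "\<dots> = E n"
            proof -
              have s: "sig = \<sigma> n" "Dl = \<Delta> n" unfolding sig_def Dl_def \<sigma>_def \<Delta>_def by simp_all
              have "p \<theta> n^3 * \<Delta> n * (real n * \<sigma> n) = (p \<theta> n * \<Delta> n) * (p \<theta> n ^ 2 * (real n * \<sigma> n))"
                by (simp add: power2_eq_square power3_eq_cube mult_ac)
              then show ?thesis unfolding E_def s using pi(2) by (simp add: power_mult_distrib)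
            qed
            finally show ?thesis .
          qed
          have r': "real n * p \<theta> n / (real (k n) - real n * p \<theta> n)^2 \<le> r n"
          proof -
            have "(\<epsilon> * t n - 1)^2 \<le> (real (k n) - real n * p \<theta> n)^2" using kd et by (intro power_mono) auto
            moreover have "real (k n) - real n * p \<theta> n > 0" using kd et by linarith
            ultimately have "\<theta> * t n / (real (k n) - real n * p \<theta> n)^2 \<le> \<theta> * t n / (\<epsilon> * t n - 1)^2"
              using th tp et by (intro divide_left_mono mult_pos_pos) auto
            then show ?thesis unfolding r_def pi(1) .
          qed
          have "a n * (1 - r n) \<le> a n * (1 - real n * p \<theta> n / (real (k n) - real n * p \<theta> n)^2)"
            using r' PP_nonneg[of "k n"] unfolding aq by (intro mult_left_mono) auto
          also have "\<dots> \<le> E n" using A B unfolding aq by simp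
          finally have "a n * (1 - r n) \<le> E n" .
          then show ?case using elim(4) by (simp add: pos_le_divide_eq)
        qed
      qed
    next
      fix \<epsilon> :: real assume e: "0 < \<epsilon>" "\<epsilon> < 1"
      define \<theta> where "\<theta> = 1 + \<epsilon>"
      have th: "0 < \<theta>" unfolding \<theta>_def using e by simp
      define L where "L n = (1 - p \<theta> n * \<Delta> n) * exp (- (\<theta>^2 * x^2) / 2 - p \<theta> n * (\<theta>^2 * x^2)) - \<theta> / \<epsilon>^2 / t n" for n
      show "\<exists>L. L \<longlonglongrightarrow> exp (- ((1 + \<epsilon>)^2 * (x^2 / 2))) \<and> eventually (\<lambda>n. L n \<le> a n) sequentially"
      proof (intro exI conjI)
        have "L \<longlonglongrightarrow> (1 - 0) * exp (- (\<theta>^2 * x^2) / 2 - 0 * (\<theta>^2 * x^2)) - 0"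
          unfolding L_def
          by (intro tendsto_intros pD p0 tendsto_divide_0[OF tendsto_const filterlim_at_top_imp_at_infinity[OF t_top]])
        then show "L \<longlonglongrightarrow> exp (- ((1 + \<epsilon>)^2 * (x^2 / 2)))" by (simp add: \<theta>_def)
        have ev2: "eventually (\<lambda>n. p \<theta> n \<le> 1/2) sequentially"
          using order_tendstoD(2)[OF p0[of \<theta>], of "1/2"] by (simp add: eventually_mono)
        have ev3: "eventually (\<lambda>n. t n > 0) sequentially" using t_top by (simp add: filterlim_at_top_dense)
        show "eventually (\<lambda>n. L n \<le> a n) sequentially"
          using ev ev2 ev3
        proof eventually_elim
          case (elim n)
          interpret fg n "d n" "v n" using fgn elim by simp
          have aq: "a n = PP (k n)" using a_eq elim by simp
          have tp: "t n > 0" using elim by simp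
          have pi: "real n * p \<theta> n = \<theta> * t n" "p \<theta> n ^ 2 * (real n * \<sigma> n) = \<theta>^2 * x^2"
            using pid[of n \<theta>] elim by auto
          have kt: "real (k n) \<le> t n" unfolding k_def using t0[of n] by (simp add: of_nat_nat)
          have kd: "real n * p \<theta> n - real (k n) \<ge> \<epsilon> * t n" using kt pi unfolding \<theta>_def by (simp add: algebra_simps)
          have et: "\<epsilon> * t n > 0" using tp e by simp
          have klt: "real (k n) < real n * p \<theta> n" using kd et by simp
          have p_ok: "0 \<le> p \<theta> n" "p \<theta> n \<le> 1/2" using pnn th elim by auto
          have A: "Phi (p \<theta> n) - real n * p \<theta> n / (real n * p \<theta> n - real (k n))^2 \<le> PP (k n)"
            by (rule PP_lower[OF p_ok klt])
          have B: "(1 - p \<theta> n * \<Delta> n) * exp (- (\<theta>^2 * x^2) / 2 - p \<theta> n * (\<theta>^2 * x^2)) \<le> Phi (p \<theta> n)"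
          proof -
            have s: "sig = \<sigma> n" "Dl = \<Delta> n" unfolding sig_def Dl_def \<sigma>_def \<Delta>_def by simp_all
            have "p \<theta> n^3 * (real n * \<sigma> n) = p \<theta> n * (p \<theta> n ^ 2 * (real n * \<sigma> n))"
              by (simp add: power2_eq_square power3_eq_cube mult_ac)
            then have "(1 - p \<theta> n * \<Delta> n) * exp (- (\<theta>^2 * x^2) / 2 - p \<theta> n * (\<theta>^2 * x^2))
               = (1 - p \<theta> n * Dl) * exp (- (p \<theta> n ^2) * (real n * sig) / 2 - (p \<theta> n ^3) * (real n * sig))"
              unfolding s using pi(2) by simp
            also have "\<dots> \<le> Phi (p \<theta> n)" by (rule Phi_lower[OF p_ok])
            finally show ?thesis .
          qed
          have r': "real n * p \<theta> n / (real n * p \<theta> n - real (k n))^2 \<le> \<theta> / \<epsilon>^2 / t n"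
          proof -
            have "(\<epsilon> * t n)^2 \<le> (real n * p \<theta> n - real (k n))^2" using kd et by (intro power_mono) auto
            moreover have "real n * p \<theta> n - real (k n) > 0" using kd et by linarith
            ultimately have "\<theta> * t n / (real n * p \<theta> n - real (k n))^2 \<le> \<theta> * t n / (\<epsilon> * t n)^2"
              using th tp et by (intro divide_left_mono mult_pos_pos) auto
            also have "\<dots> = \<theta> / \<epsilon>^2 / t n" using tp e by (simp add: field_simps power2_eq_square)
            finally show ?thesis unfolding pi(1) .
          qed
          show ?case unfolding L_def using A B r' aq by linarith
        qed
      qed
    qed
    then show "a \<longlonglongrightarrow> exp (- (x\<^sup>2) / 2)" by simp
  qed
qed


end
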